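(* Suppose $\hat F_R$ is $\lambda_R$-strongly convex with $\lambda_R\ge\lambda>0$, where $\lambda>0$ is such that $\hat F_S$ is $\lambda$-strongly convex for every dataset $S$. Then $\mathrm{RS}_{\mathrm{ERM}}(R)\le\frac{L}{n\lambda_R}$, $\mathrm{GS}_{\mathrm{ERM}}\le\Delta_{\mathrm{GS}}:=\frac{L}{n\lambda}$, and $$\frac{\mathrm{RS}_{\mathrm{ERM}}(R)}{\Delta_{\mathrm{GS}}}\le\frac{L/(n\lambda_R)}{L/(n\lambda)}=\frac{\lambda}{\lambda_R}.$$
   Context: Let $\mathcal{W}\subseteq\mathbb{R}^d$ and let $f:\mathcal{W}\times\mathcal{Z}\to\mathbb{R}$ be differentiable in $w$ and $L$-Lipschitz in $w$ uniformly over $z$ (so $\|\nabla_w f(w,z)\|_2\le L$). For a dataset $R=\{z_1,\dots,z_n\}$, $\hat F_R(w)=\frac1n\sum_{i=1}^nf(w,z_i)$ and $w_R=\arg\min_{w\in\mathcal{W}}\hat F_R(w)$; minimizers are assumed to be stationary points ($\nabla\hat F_R(w_R)=0$, e.g. $\mathcal{W}=\mathbb{R}^d$). $\hat F_R$ is $\lambda_R$-strongly convex if $\hat F_R(w)-\hat F_R(w')\ge\langle\nabla\hat F_R(w'),w-w'\rangle+\frac{\lambda_R}{2}\|w-w'\|^2$ for all $w,w'\in\mathcal{W}$. The retain sensitivity is $\mathrm{RS}_{\mathrm{ERM}}(R)=\sup_{z\in\mathcal{Z}}\|w_R-w_{R\cup\{z\}}\|$ and the global sensitivity is $\mathrm{GS}_{\mathrm{ERM}}=\sup_R\mathrm{RS}_{\mathrm{ERM}}(R)$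 over datasets $R$ of size $n$. *)

theory Defs
  imports "HOL-Analysis.Analysis" "HOL-Library.Multiset"
begin

text \<open>Datasets are finite multisets of data points; R \<union> {z} is add_mset z R.\<close>

definition emp_risk :: "('a \<Rightarrow> 'z \<Rightarrow> real) \<Rightarrow> 'z multiset \<Rightarrow> 'a \<Rightarrow> real" where
  "emp_risk f S w = (\<Sum>z\<in>#S. f w z) / real (size S)"

definition emp_grad :: "('a \<Rightarrow> 'z \<Rightarrow> 'a::real_vector) \<Rightarrow> 'z multiset \<Rightarrow> 'a \<Rightarrow> 'a" where
  "emp_grad gf S w = (1 / real (size S)) *\<^sub>R (\<Sum>z\<in>#S. gf w z)"

definition strongly_convex_grad ::
    "'a::real_inner set \<Rightarrow> ('a \<Rightarrow> real) \<Rightarrow> ('a \<Rightarrow> 'a) \<Rightarrow> real \<Rightarrow> bool" where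
  "strongly_convex_grad W F G lam \<longleftrightarrow>
     (\<forall>w\<in>W. \<forall>w'\<in>W. F w - F w' \<ge> inner (G w') (w - w') + lam / 2 * (norm (w - w'))\<^sup>2)"

text \<open>wopt S denotes the (chosen) empirical risk minimiser w_S.\<close>
definition retain_sens :: "('z multiset \<Rightarrow> 'a::real_normed_vector) \<Rightarrow> 'z multiset \<Rightarrow> real" where
  "retain_sens wopt R = (SUP z. norm (wopt R - wopt (add_mset z R)))"

definition global_sens :: "('z multiset \<Rightarrow> 'a::real_normed_vector) \<Rightarrow> nat \<Rightarrow> real" where
  "global_sens wopt n = (SUP R\<in>{R. size R = n}. retain_sens wopt R)"

end

theory Submission
  imports Defs
begin

lemma key_bound:
  fixes W :: "'a::euclidean_space set"
    and f :: "'a \<Rightarrow> 'z \<Rightarrow> real"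
    and gf :: "'a \<Rightarrow> 'z \<Rightarrow> 'a"
    and wopt :: "'z multiset \<Rightarrow> 'a"
  assumes grad_bound: "\<And>w z. w \<in> W \<Longrightarrow> norm (gf w z) \<le> L"
    and minimiser: "\<And>S. S \<noteq> {#} \<Longrightarrow> wopt S \<in> W \<and>
                       (\<forall>w\<in>W. emp_risk f S (wopt S) \<le> emp_risk f S w)"
    and stationary: "\<And>S. S \<noteq> {#} \<Longrightarrow> emp_grad gf S (wopt S) = 0"
    and n_pos: "n > 0" and c_pos: "c > 0" and S_size: "size S = n"
    and sc: "strongly_convex_grad W (emp_risk f S) (emp_grad gf S) c"
  shows "norm (wopt S - wopt (add_mset z S)) \<le> L / (real n * c)"
proof -
  define a where "a = wopt S"
  define b where "b = wopt (add_mset z S)"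
  have Sne: "S \<noteq> {#}" using n_pos S_size by auto
  have aW: "a \<in> W" using minimiser[OF Sne] a_def by auto
  have bW: "b \<in> W" using minimiser[of "add_mset z S"] b_def by auto
  have L0: "0 \<le> L" using grad_bound[OF aW, of z] norm_ge_zero[of "gf a z"] by linarith
  have ga: "emp_grad gf S a = 0" using stationary[OF Sne] a_def by simp
  have gb0: "emp_grad gf (add_mset z S) b = 0" using stationary[of "add_mset z S"] b_def by simp
  hence "(1 / real (Suc n)) *\<^sub>R (gf b z + (\<Sum>y\<in>#S. gf b y)) = 0"
    by (simp add: emp_grad_def S_size)
  hence sumb: "(\<Sum>y\<in>#S. gf b y) = - gf b z"
    by (simp add: eq_neg_iff_add_eq_0 add.commute)
  have gb: "emp_grad gf S b = - (1 / real n) *\<^sub>R gf b z"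
    by (simp add: emp_grad_def S_size sumb)
  have i1: "emp_risk f S b - emp_risk f S a \<ge> inner (emp_grad gf S a) (b - a) + c/2 * (norm (b - a))\<^sup>2"
    using sc aW bW unfolding strongly_convex_grad_def by blast
  have i2: "emp_risk f S a - emp_risk f S b \<ge> inner (emp_grad gf S b) (a - b) + c/2 * (norm (a - b))\<^sup>2"
    using sc aW bW unfolding strongly_convex_grad_def by blast
  have nab: "norm (a - b) = norm (b - a)" by (simp add: norm_minus_commute)
  have "c * (norm (a - b))\<^sup>2 \<le> - inner (emp_grad gf S b) (a - b)"
    using i1 i2 ga nab by simp
  also have "\<dots> = (1 / real n) * inner (gf b z) (a - b)" by (simp add: gb)
  also have "\<dots> \<le> (1 / real n) * (norm (gf b z) * norm (a - b))"
    using n_pos by (intro mult_left_mono) (auto intro: norm_cauchy_schwarz)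
  also have "\<dots> \<le> (1 / real n) * (L * norm (a - b))"
    using grad_bound[OF bW, of z] by (intro mult_left_mono mult_right_mono) auto
  finally have main: "c * (norm (a - b))\<^sup>2 \<le> (L / real n) * norm (a - b)" by simp
  show ?thesis
  proof (cases "norm (a - b) = 0")
    case True thus ?thesis using L0 c_pos n_pos a_def b_def by simp
  next
    case False
    hence pos: "norm (a - b) > 0" by simp
    have "(c * norm (a - b)) * norm (a - b) \<le> (L / real n) * norm (a - b)"
      using main by (simp add: power2_eq_square mult.assoc)
    hence "c * norm (a - b) \<le> L / real n"
      using pos by (rule mult_right_le_imp_le)
    thus ?thesis using c_pos n_pos a_def b_def
      by (simp add: field_simps)
  qed
qed

theorem mainTheorem11:
  fixes W :: "'a::euclidean_space set"
    and f :: "'a \<Rightarrow> 'z \<Rightarrow> real"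
    and gf :: "'a \<Rightarrow> 'z \<Rightarrow> 'a"
    and wopt :: "'z multiset \<Rightarrow> 'a"
    and L lam lamR :: real and n :: nat and R :: "'z multiset"
  assumes deriv: "\<And>w z. w \<in> W \<Longrightarrow>
                    ((\<lambda>v. f v z) has_derivative (\<lambda>h. inner (gf w z) h)) (at w within W)"
    and lip: "\<And>z. L-lipschitz_on W (\<lambda>w. f w z)"
    and grad_bound: "\<And>w z. w \<in> W \<Longrightarrow> norm (gf w z) \<le> L"
    and minimiser: "\<And>S. S \<noteq> {#} \<Longrightarrow> wopt S \<in> W \<and>
                       (\<forall>w\<in>W. emp_risk f S (wopt S) \<le> emp_risk f S w)"
    and stationary: "\<And>S. S \<noteq> {#} \<Longrightarrow> emp_grad gf S (wopt S) = 0"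
    and n_pos: "n > 0"
    and lam_pos: "lam > 0"
    and sc_all: "\<And>S. size S = n \<Longrightarrow> strongly_convex_grad W (emp_risk f S) (emp_grad gf S) lam"
    and R_size: "size R = n"
    and sc_R: "strongly_convex_grad W (emp_risk f R) (emp_grad gf R) lamR"
    and lamR_ge: "lamR \<ge> lam"
  shows "retain_sens wopt R \<le> L / (real n * lamR)
         \<and> global_sens wopt n \<le> L / (real n * lam)
         \<and> retain_sens wopt R / (L / (real n * lam)) \<le> lam / lamR"
proof -
  have lamR_pos: "lamR > 0" using lam_pos lamR_ge by linarith
  have Rne: "R \<noteq> {#}" using n_pos R_size by auto
  have L0: "0 \<le> L" using grad_bound[of "wopt R"] minimiser[OF Rne] norm_ge_zero
    by (meson order_trans)
  have rs: "\<And>S c. size S = n \<Longrightarrow> c > 0 \<Longrightarrow>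
      strongly_convex_grad W (emp_risk f S) (emp_grad gf S) c \<Longrightarrow>
      retain_sens wopt S \<le> L / (real n * c)"
    unfolding retain_sens_def
    by (rule cSUP_least, simp, rule key_bound[OF grad_bound minimiser stationary n_pos]) auto
  have A: "retain_sens wopt R \<le> L / (real n * lamR)" using rs[OF R_size lamR_pos sc_R] .
  have B: "global_sens wopt n \<le> L / (real n * lam)"
    unfolding global_sens_def
  proof (rule cSUP_least)
    show "{R :: 'z multiset. size R = n} \<noteq> {}"
    proof
      assume h: "{R :: 'z multiset. size R = n} = {}"
      have "R \<in> {R :: 'z multiset. size R = n}" using R_size by simp
      thus False unfolding h by simp
    qed
  next
    fix S :: "'z multiset" assume "S \<in> {R. size R = n}"
    thus "retain_sens wopt S \<le> L / (real n * lam)" using rs[OF _ lam_pos sc_all] by auto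
  qed
  have C: "retain_sens wopt R / (L / (real n * lam)) \<le> lam / lamR"
  proof (cases "L = 0")
    case True thus ?thesis using lam_pos lamR_pos by simp
  next
    case False
    hence Lp: "L > 0" using L0 by simp
    have "retain_sens wopt R / (L / (real n * lam)) \<le> (L / (real n * lamR)) / (L / (real n * lam))"
      using A Lp lam_pos n_pos by (intro divide_right_mono) auto
    also have "\<dots> = lam / lamR" using Lp n_pos lam_pos lamR_pos by (simp add: field_simps)
    finally show ?thesis .
  qed
  show ?thesis using A B C by blast
qed

end
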